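(* Let $H=(\mathcal{V},\mathcal{E})$ be a hypergraph. Let $\chi_{cf}(H)$ be the number of non-zero colours used in an optimal conflict-free colouring of $H$, and let $\chi_{min}=\min_{t}\chi(G_{R,t})$ be the minimum chromatic number over all co-occurrence graphs $G_{R,t}$ of $H$ (over all representative functions $t$, with $R=t(\mathcal{E})$). Then $\chi_{cf}(H)=\chi_{min}$.
   Context: A hypergraph $H=(\mathcal{V},\mathcal{E})$ has a finite vertex set $\mathcal{V}$ and a family $\mathcal{E}$ of nonempty subsets of $\mathcal{V}$ (hyperedges). A conflict-free colouring of $H$ is a function $C:\mathcal{V}\to\mathbb{N}=\{0,1,2,\dots\}$ such that for every hyperedge $E\in\mathcal{E}$ there is a colour $j\geq 1$ with $|E\cap C^{-1}(j)|=1$; colour $0$ is a special "uncoloured" colour and is not counted. $\chi_{cf}(H)$ is the minimum number of non-zero colours used by a conflict-free colouring. A representative function is a map $t:\mathcal{E}\to\mathcal{V}$ with $t(E)\in E$ for every $E$; $R=t(\mathcal{E})$ is its image (the set of representatives). The co-occurrence graph $G_{R,t}$ is the simple graph with vertex set $R$, in which distinct $u,v\in R$ are adjacent if and only if there is a hyperedge $E\in\mathcal{E}$ with $u,v\in E$ and $t(E)\in\{u,v\}$. $\chi(G)$ denotes the chromatic number of a graph $G$. *)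

theory Defs
  imports Main
begin

definition hypergraph :: "'a set \<Rightarrow> 'a set set \<Rightarrow> bool" where
  "hypergraph V E \<longleftrightarrow> finite V \<and> (\<forall>e\<in>E. e \<noteq> {} \<and> e \<subseteq> V)"

text \<open>Conflict-free colouring; colour 0 is the uncoloured colour.\<close>
definition cf_colouring :: "'a set set \<Rightarrow> ('a \<Rightarrow> nat) \<Rightarrow> bool" where
  "cf_colouring E C \<longleftrightarrow> (\<forall>e\<in>E. \<exists>j\<ge>1. card (e \<inter> C -` {j}) = 1)"

definition num_colours :: "'a set \<Rightarrow> ('a \<Rightarrow> nat) \<Rightarrow> nat" where
  "num_colours V C = card (C ` V - {0})"

definition chi_cf :: "'a set \<Rightarrow> 'a set set \<Rightarrow> nat" where
  "chi_cf V E = (LEAST k. \<exists>C. cf_colouring E C \<and> num_colours V C = k)"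

definition representative :: "'a set set \<Rightarrow> ('a set \<Rightarrow> 'a) \<Rightarrow> bool" where
  "representative E t \<longleftrightarrow> (\<forall>e\<in>E. t e \<in> e)"

definition cooc_adj :: "'a set set \<Rightarrow> ('a set \<Rightarrow> 'a) \<Rightarrow> 'a \<Rightarrow> 'a \<Rightarrow> bool" where
  "cooc_adj E t u v \<longleftrightarrow> u \<in> t ` E \<and> v \<in> t ` E \<and> u \<noteq> v \<and>
     (\<exists>e\<in>E. u \<in> e \<and> v \<in> e \<and> t e \<in> {u, v})"

definition chromatic_number :: "'a set \<Rightarrow> ('a \<Rightarrow> 'a \<Rightarrow> bool) \<Rightarrow> nat" where
  "chromatic_number R adj = (LEAST k. \<exists>c :: 'a \<Rightarrow> nat. c ` R \<subseteq> {..<k} \<and>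
      (\<forall>u\<in>R. \<forall>v\<in>R. adj u v \<longrightarrow> c u \<noteq> c v))"

definition chi_min :: "'a set set \<Rightarrow> nat" where
  "chi_min E = (LEAST k. \<exists>t. representative E t \<and> chromatic_number (t ` E) (cooc_adj E t) = k)"

end

theory Submission
  imports Defs
begin

lemma inj_lt_card:
  assumes "finite S"
  obtains f :: "'b \<Rightarrow> nat" where "inj_on f S" "f ` S \<subseteq> {..<card S}"
proof -
  obtain h where h: "bij_betw h S {0..<card S}" using ex_bij_betw_finite_nat[OF assms] by blast
  then have "inj_on h S" "h ` S \<subseteq> {..<card S}" by (auto simp: bij_betw_def)
  then show ?thesis using that by blast
qed

lemma col_to_cf:
  assumes H: "hypergraph V E" and rep: "representative E t"
    and cR: "c ` (t ` E) \<subseteq> {..<k}"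
    and prp: "\<forall>u\<in>t ` E. \<forall>v\<in>t ` E. cooc_adj E t u v \<longrightarrow> c u \<noteq> c v"
  shows "\<exists>C. cf_colouring E C \<and> num_colours V C \<le> k"
proof -
  define C where "C v = (if v \<in> t ` E then Suc (c v) else 0)" for v
  have "C ` V - {0} \<subseteq> Suc ` {..<k}" using cR by (auto simp: C_def)
  hence "card (C ` V - {0}) \<le> card (Suc ` {..<k})" by (intro card_mono) auto
  also have "\<dots> = k" by (simp add: card_image)
  finally have num: "num_colours V C \<le> k" by (simp add: num_colours_def)
  have "cf_colouring E C"
    unfolding cf_colouring_def
  proof
    fix e assume e: "e \<in> E"
    have te: "t e \<in> e" using rep e by (auto simp: representative_def)
    have "e \<inter> C -` {Suc (c (t e))} = {t e}"
    proof (intro equalityI subsetI)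
      fix v assume v: "v \<in> e \<inter> C -` {Suc (c (t e))}"
      then have vR: "v \<in> t ` E" and cv: "c v = c (t e)"
        by (auto simp: C_def split: if_splits)
      show "v \<in> {t e}"
      proof (rule ccontr)
        assume "v \<notin> {t e}"
        then have "cooc_adj E t v (t e)" using vR e te v by (auto simp: cooc_adj_def)
        then show False using prp vR e cv by auto
      qed
    next
      fix v assume "v \<in> {t e}" then show "v \<in> e \<inter> C -` {Suc (c (t e))}"
        using te e by (auto simp: C_def)
    qed
    then show "\<exists>j\<ge>1. card (e \<inter> C -` {j}) = 1" by (intro exI[of _ "Suc (c (t e))"]) auto
  qed
  with num show ?thesis by blast
qed

lemma cf_to_col:
  assumes H: "hypergraph V E" and cf: "cf_colouring E C"
  shows "\<exists>t. representative E t \<and> chromatic_number (t ` E) (cooc_adj E t) \<le> num_colours V C"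
proof -
  define P where "P e v \<longleftrightarrow> v \<in> e \<and> C v \<ge> 1 \<and> (\<forall>w\<in>e. C w = C v \<longrightarrow> w = v)" for e v
  define t where "t e = (SOME v. P e v)" for e
  have Pt: "P e (t e)" if e: "e \<in> E" for e
  proof -
    obtain j where j: "j \<ge> 1" "card (e \<inter> C -` {j}) = 1" using cf e by (auto simp: cf_colouring_def)
    then obtain v where "e \<inter> C -` {j} = {v}" using card_1_singletonE[OF j(2)] by blast
    then have "P e v" using j(1) by (auto simp: P_def)
    then show ?thesis unfolding t_def by (rule someI)
  qed
  have rep: "representative E t" using Pt by (auto simp: representative_def P_def)
  define S where "S = C ` V - {0}"
  have fS: "finite S" using H by (auto simp: S_def hypergraph_def)
  obtain f :: "nat \<Rightarrow> nat" where f: "inj_on f S" "f ` S \<subseteq> {..<card S}"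
    using inj_lt_card[OF fS] by blast
  have RS: "C v \<in> S" if "v \<in> t ` E" for v
  proof -
    from that obtain e where e: "e \<in> E" "v = t e" by blast
    then have "P e v" using Pt by simp
    then have "v \<in> e" "C v \<noteq> 0" unfolding P_def by auto
    moreover have "e \<subseteq> V" using H e(1) unfolding hypergraph_def by blast
    ultimately show ?thesis unfolding S_def by blast
  qed
  have "\<exists>c :: 'a \<Rightarrow> nat. c ` (t ` E) \<subseteq> {..<card S} \<and>
      (\<forall>u\<in>t ` E. \<forall>v\<in>t ` E. cooc_adj E t u v \<longrightarrow> c u \<noteq> c v)"
  proof (intro exI[of _ "\<lambda>v. f (C v)"] conjI ballI impI)
    show "(\<lambda>v. f (C v)) ` (t ` E) \<subseteq> {..<card S}" using f(2) RS by blast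
  next
    fix u v assume u: "u \<in> t ` E" and v: "v \<in> t ` E" and adj: "cooc_adj E t u v"
    then obtain e where e: "e \<in> E" "u \<in> e" "v \<in> e" "t e \<in> {u, v}" "u \<noteq> v"
      by (auto simp: cooc_adj_def)
    have PP: "P e (t e)" by (rule Pt[OF e(1)])
    have "C u \<noteq> C v"
    proof (cases "t e = u")
      case True
      then show ?thesis using PP e(3) e(5) unfolding P_def by metis
    next
      case False
      then have "t e = v" using e(4) by blast
      then show ?thesis using PP e(2) e(5) unfolding P_def by metis
    qed
    show "f (C u) \<noteq> f (C v)"
    proof
      assume "f (C u) = f (C v)"
      then have "C u = C v" using inj_onD[OF f(1) _ RS[OF u] RS[OF v]] by blast
      with \<open>C u \<noteq> C v\<close> show False by blast
    qed
  qed
  then have "chromatic_number (t ` E) (cooc_adj E t) \<le> card S"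
    unfolding chromatic_number_def by (rule Least_le)
  then show ?thesis using rep by (auto simp: num_colours_def S_def)
qed

lemma chrom_attained:
  assumes "finite R" and irr: "\<And>u. \<not> adj u u"
  shows "\<exists>c :: 'a \<Rightarrow> nat. c ` R \<subseteq> {..<chromatic_number R adj} \<and>
      (\<forall>u\<in>R. \<forall>v\<in>R. adj u v \<longrightarrow> c u \<noteq> c v)"
proof -
  obtain f :: "'a \<Rightarrow> nat" where f: "inj_on f R" "f ` R \<subseteq> {..<card R}"
    using inj_lt_card[OF assms(1)] by blast
  define P where "P k \<longleftrightarrow> (\<exists>c :: 'a \<Rightarrow> nat. c ` R \<subseteq> {..<k} \<and> (\<forall>u\<in>R. \<forall>v\<in>R. adj u v \<longrightarrow> c u \<noteq> c v))" for k
  have "P (card R)" unfolding P_def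
  proof (intro exI[of _ f] conjI ballI impI)
    show "f ` R \<subseteq> {..<card R}" by (rule f(2))
  next
    fix u v assume uv: "u \<in> R" "v \<in> R" "adj u v"
    then have "u \<noteq> v" using irr by blast
    then show "f u \<noteq> f v" using inj_onD[OF f(1) _ uv(1) uv(2)] by blast
  qed
  then have "P (LEAST k. P k)" by (rule LeastI)
  then show ?thesis unfolding chromatic_number_def P_def .
qed

theorem theorem1:
  fixes V :: "'a set" and E :: "'a set set"
  assumes "hypergraph V E"
  shows "chi_cf V E = chi_min E"
proof -
  have H: "hypergraph V E" by fact
  have "E \<subseteq> Pow V" using H unfolding hypergraph_def by blast
  moreover have "finite (Pow V)" using H unfolding hypergraph_def by simp
  ultimately have finE: "finite E" by (rule finite_subset)
  define t0 where "t0 e = (SOME x. x \<in> e)" for e :: "'a set"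
  have rep0: "representative E t0" unfolding representative_def
  proof
    fix e assume "e \<in> E"
    then obtain x where "x \<in> e" using H unfolding hypergraph_def by blast
    then show "t0 e \<in> e" unfolding t0_def by (rule someI)
  qed
  have irr: "\<And>t u. \<not> cooc_adj E t u u" by (simp add: cooc_adj_def)
  have exmin: "\<exists>k t. representative E t \<and> chromatic_number (t ` E) (cooc_adj E t) = k"
    using rep0 by blast
  define Q where "Q k \<longleftrightarrow> (\<exists>t. representative E t \<and> chromatic_number (t ` E) (cooc_adj E t) = k)" for k
  have "Q (LEAST k. Q k)" using exmin unfolding Q_def[abs_def] by (rule LeastI_ex)
  then obtain t where t: "representative E t" "chromatic_number (t ` E) (cooc_adj E t) = chi_min E"
    unfolding Q_def chi_min_def by blast
  obtain c where c: "c ` (t ` E) \<subseteq> {..<chi_min E}"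
     "\<forall>u\<in>t ` E. \<forall>v\<in>t ` E. cooc_adj E t u v \<longrightarrow> c u \<noteq> c v"
    using chrom_attained[of "t ` E" "cooc_adj E t", OF _ irr] finE t(2) by auto
  obtain C where C: "cf_colouring E C" "num_colours V C \<le> chi_min E"
    using col_to_cf[OF H t(1) c] by blast
  have "chi_cf V E \<le> num_colours V C"
    unfolding chi_cf_def using C(1) by (intro Least_le) blast
  with C have le1: "chi_cf V E \<le> chi_min E" by linarith
  have "\<exists>k C. cf_colouring E C \<and> num_colours V C = k" using C by blast
  define Q2 where "Q2 k \<longleftrightarrow> (\<exists>C. cf_colouring E C \<and> num_colours V C = k)" for k
  have "Q2 (LEAST k. Q2 k)" using \<open>\<exists>k C. cf_colouring E C \<and> num_colours V C = k\<close>
    unfolding Q2_def[abs_def] by (rule LeastI_ex)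
  then obtain C' where C': "cf_colouring E C'" "num_colours V C' = chi_cf V E"
    unfolding Q2_def chi_cf_def by blast
  obtain t' where t': "representative E t'"
    "chromatic_number (t' ` E) (cooc_adj E t') \<le> num_colours V C'"
    using cf_to_col[OF H C'(1)] by blast
  have "chi_min E \<le> chromatic_number (t' ` E) (cooc_adj E t')"
    unfolding chi_min_def using t'(1) by (intro Least_le) blast
  with t' C' have "chi_min E \<le> chi_cf V E" by linarith
  with le1 show ?thesis by linarith
qed

end
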